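(* Let $x,y$ be two distinct points of the upper half plane $\mathbb{H}^2=\{z\in\mathbb{C}:\operatorname{Im}z>0\}$. Then the hyperbolic midpoint of the hyperbolic geodesic segment joining $x$ and $y$ is constructible by ruler and compass from the points $0,1,x,y$.
   Context: The hyperbolic distance $\rho$ on $\mathbb{H}^2$ is given by $\cosh\rho(x,y)=1+\frac{|x-y|^2}{2\,\operatorname{Im}x\,\operatorname{Im}y}$. The hyperbolic geodesic segment $J[x,y]$ is the arc joining $x$ and $y$ of the circle orthogonal to the real axis (or the vertical line, if $\operatorname{Re}x=\operatorname{Re}y$) containing $x,y$; its hyperbolic midpoint is the unique $z\in J[x,y]$ with $\rho(x,z)=\rho(z,y)$. A point is constructible by ruler and compass from a finite set $S\subset\mathbb{C}$ if it belongs to the smallest set $C\supseteq S$ closed under adding intersection points of lines through two distinct points of $C$ and circles with centre in $C$ passing through a point of $C$ (the real axis $\partial\mathbb{H}^2$ is the line through $0$ and $1$). *)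

theory Defs
  imports "HOL-Analysis.Analysis"
begin

definition hdist :: "complex \<Rightarrow> complex \<Rightarrow> real" where
  "hdist x y = arcosh (1 + (cmod (x - y))\<^sup>2 / (2 * Im x * Im y))"

definition geodesic_segment :: "complex \<Rightarrow> complex \<Rightarrow> complex set" where
  "geodesic_segment x y =
     (if Re x = Re y
      then {z. Re z = Re x \<and> min (Im x) (Im y) \<le> Im z \<and> Im z \<le> max (Im x) (Im y)}
      else {z. \<exists>c::real. cmod (x - of_real c) = cmod (y - of_real c)
                 \<and> cmod (z - of_real c) = cmod (x - of_real c) \<and> Im z > 0
                 \<and> min (Re x) (Re y) \<le> Re z \<and> Re z \<le> max (Re x) (Re y)})"

definition hyp_midpoint :: "complex \<Rightarrow> complex \<Rightarrow> complex" where
  "hyp_midpoint x y = (THE z. z \<in> geodesic_segment x y \<and> hdist x z = hdist z y)"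

definition line_through :: "complex \<Rightarrow> complex \<Rightarrow> complex set" where
  "line_through p q = {p + of_real t * (q - p) | t. True}"

definition circle_through :: "complex \<Rightarrow> complex \<Rightarrow> complex set" where
  "circle_through c d = {z. cmod (z - c) = cmod (d - c)}"

inductive_set constructible :: "complex set \<Rightarrow> complex set" for S :: "complex set" where
  base: "z \<in> S \<Longrightarrow> z \<in> constructible S"
| line_line: "\<lbrakk>p \<in> constructible S; q \<in> constructible S; r \<in> constructible S;
    s \<in> constructible S; p \<noteq> q; r \<noteq> s; line_through p q \<noteq> line_through r s;
    z \<in> line_through p q; z \<in> line_through r s\<rbrakk> \<Longrightarrow> z \<in> constructible S"
| line_circle: "\<lbrakk>p \<in> constructible S; q \<in> constructible S; c \<in> constructible S;
    d \<in> constructible S; p \<noteq> q;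
    z \<in> line_through p q; z \<in> circle_through c d\<rbrakk> \<Longrightarrow> z \<in> constructible S"
| circle_circle: "\<lbrakk>c \<in> constructible S; d \<in> constructible S; c' \<in> constructible S;
    d' \<in> constructible S; circle_through c d \<noteq> circle_through c' d';
    z \<in> circle_through c d; z \<in> circle_through c' d'\<rbrakk> \<Longrightarrow> z \<in> constructible S"

end

theory Submission
  imports Defs
begin


lemma circle_neq:
  assumes "c \<noteq> c'" shows "circle_through c d \<noteq> circle_through c' d'"
proof
  assume eq: "circle_through c d = circle_through c' d'"
  define r where "r = cmod (d - c)"
  have r0: "r \<ge> 0" by (simp add: r_def)
  have h: "cmod (z - c') = cmod (d' - c')" if "cmod (z - c) = r" for z
  proof -
    have "z \<in> circle_through c d" using that by (simp add: circle_through_def r_def)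
    hence "z \<in> circle_through c' d'" using eq by simp
    thus ?thesis by (simp add: circle_through_def)
  qed
  define w where "w = c - c'"
  have 1: "cmod (w + of_real r) = cmod (w - of_real r)"
    using h[of "c + of_real r"] h[of "c - of_real r"] r0 by (simp add: w_def algebra_simps)
  have 2: "cmod (w + \<i> * of_real r) = cmod (w - \<i> * of_real r)"
    using h[of "c + \<i> * of_real r"] h[of "c - \<i> * of_real r"] r0 by (simp add: w_def algebra_simps norm_mult)
  have a: "Re w * r = 0"
  proof -
    have "(cmod (w + of_real r))^2 = (cmod (w - of_real r))^2" using 1 by simp
    hence "(Re (w + of_real r))^2 + (Im (w + of_real r))^2 = (Re (w - of_real r))^2 + (Im (w - of_real r))^2"
      by (simp only: cmod_power2)
    thus ?thesis by (simp add: power2_eq_square algebra_simps)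
  qed
  have b: "Im w * r = 0"
  proof -
    have "(cmod (w + \<i> * of_real r))^2 = (cmod (w - \<i> * of_real r))^2" using 2 by simp
    hence "(Re (w + \<i> * of_real r))^2 + (Im (w + \<i> * of_real r))^2 = (Re (w - \<i> * of_real r))^2 + (Im (w - \<i> * of_real r))^2"
      by (simp only: cmod_power2)
    thus ?thesis by (simp add: power2_eq_square algebra_simps)
  qed
  show False
  proof (cases "r = 0")
    case False
    hence "w = 0" using a b by (simp add: complex_eq_iff)
    thus False using assms by (simp add: w_def)
  next
    case True
    have hc: "cmod (c - c') = cmod (d' - c')" using h[of c] True by simp
    have "(2*c' - c) \<in> circle_through c' d'"
      using hc by (simp add: circle_through_def norm_minus_commute)
    hence "(2*c' - c) \<in> circle_through c d" using eq by simp
    hence "cmod ((2*c' - c) - c) = 0" using True by (simp add: circle_through_def r_def)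
    hence "c' = c" by simp
    thus False using assms by simp
  qed
qed
lemma line_mem: "z \<in> line_through p q \<longleftrightarrow> (\<exists>t. z = p + of_real t * (q - p))"
  by (auto simp: line_through_def)

lemma circ_mem: "z \<in> circle_through c d \<longleftrightarrow> cmod (z - c) = cmod (d - c)"
  by (simp add: circle_through_def)

definition om1 :: complex where "om1 = Complex (1/2) (sqrt 3 / 2)"
definition om2 :: complex where "om2 = Complex (1/2) (- sqrt 3 / 2)"

lemma om1_norm: "cmod om1 = 1" and om1m_norm: "cmod (om1 - 1) = 1"
  and om2_norm: "cmod om2 = 1" and om2m_norm: "cmod (om2 - 1) = 1"
  by (simp_all add: om1_def om2_def cmod_def power_divide)

context
  fixes S :: "complex set"
  assumes S0: "0 \<in> S" and S1: "1 \<in> S"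
begin

abbreviation "K \<equiv> constructible S"

lemma K0: "0 \<in> K" by (rule base) (rule S0)
lemma K1: "1 \<in> K" by (rule base) (rule S1)

lemma equi:
  assumes p: "p \<in> K" and q: "q \<in> K" and w: "cmod w = 1" "cmod (w - 1) = 1"
  shows "p + (q - p) * w \<in> K"
proof (cases "p = q")
  case True thus ?thesis using p by simp
next
  case False
  show ?thesis
  proof (rule circle_circle[OF p q q p])
    show "circle_through p q \<noteq> circle_through q p" using False by (rule circle_neq)
    show "p + (q - p) * w \<in> circle_through p q" using w by (simp add: circ_mem norm_mult)
    have "p + (q - p) * w - q = (q - p) * (w - 1)" by (simp add: algebra_simps)
    thus "p + (q - p) * w \<in> circle_through q p" using w
      by (simp add: circ_mem norm_mult norm_minus_commute)
  qed
qed

lemma midK: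
  assumes p: "p \<in> K" and q: "q \<in> K"
  shows "(p + q) / 2 \<in> K"
proof (cases "p = q")
  case True thus ?thesis using p by simp
next
  case False
  define w1 where "w1 = p + (q - p) * om1"
  define w2 where "w2 = p + (q - p) * om2"
  have w1: "w1 \<in> K" unfolding w1_def by (rule equi[OF p q om1_norm om1m_norm])
  have w2: "w2 \<in> K" unfolding w2_def by (rule equi[OF p q om2_norm om2m_norm])
  have d: "w2 - w1 = (q - p) * (- \<i> * of_real (sqrt 3))"
    by (simp add: w1_def w2_def om1_def om2_def algebra_simps complex_eq_iff)
  have w12: "w1 \<noteq> w2" using d False by auto
  have nl: "w1 \<notin> line_through p q"
  proof
    assume "w1 \<in> line_through p q"
    then obtain t where "w1 = p + of_real t * (q - p)" by (auto simp: line_mem)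
    hence "(q - p) * (om1 - of_real t) = 0" by (simp add: w1_def algebra_simps)
    hence "om1 = of_real t" using False by simp
    thus False by (simp add: om1_def complex_eq_iff)
  qed
  have "w1 \<in> line_through w1 w2" by (simp add: line_mem exI[of _ 0])
  hence ne: "line_through p q \<noteq> line_through w1 w2" using nl by auto
  show ?thesis
  proof (rule line_line[OF p q w1 w2 False w12 ne])
    show "(p + q) / 2 \<in> line_through p q"
      unfolding line_mem by (rule exI[of _ "1/2"]) (simp add: field_simps)
    have "(p + q) / 2 = w1 + of_real (1/2) * (w2 - w1)"
      by (simp add: w1_def w2_def om1_def om2_def complex_eq_iff field_simps)
    thus "(p + q) / 2 \<in> line_through w1 w2" unfolding line_mem by (rule exI)
  qed
qed

lemma reflK:
  assumes m: "m \<in> K" and r: "r \<in> K"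
  shows "2 * m - r \<in> K"
proof (cases "r = m")
  case True thus ?thesis using m by simp
next
  case False
  show ?thesis
  proof (rule line_circle[OF r m m r False])
    show "2 * m - r \<in> line_through r m"
      unfolding line_mem by (rule exI[of _ 2]) (simp add: algebra_simps)
    show "2 * m - r \<in> circle_through m r" by (simp add: circ_mem norm_minus_commute)
  qed
qed

lemma addK: "p \<in> K \<Longrightarrow> q \<in> K \<Longrightarrow> p + q \<in> K"
proof -
  assume "p \<in> K" "q \<in> K"
  hence h: "2 * ((p + q) / 2) - 0 \<in> K" using reflK[OF midK K0] by blast
  have eq: "p + q = 2 * ((p + q) / 2) - 0" by simp
  show ?thesis by (subst eq) (rule h)
qed

lemma negK: "p \<in> K \<Longrightarrow> - p \<in> K"
  using reflK[OF K0, of p] by simp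

lemma diffK: "p \<in> K \<Longrightarrow> q \<in> K \<Longrightarrow> p - q \<in> K"
  using addK[OF _ negK, of p q] by simp

lemma cnjK:
  assumes x: "x \<in> K" shows "cnj x \<in> K"
proof (rule circle_circle[OF K0 x K1 x])
  show "circle_through 0 x \<noteq> circle_through 1 x" by (rule circle_neq) simp
  show "cnj x \<in> circle_through 0 x" by (simp add: circ_mem)
  have "cnj x - 1 = cnj (x - 1)" by simp
  hence "cmod (cnj x - 1) = cmod (x - 1)" by (metis complex_mod_cnj)
  thus "cnj x \<in> circle_through 1 x" by (simp add: circ_mem)
qed

lemma ReK: "x \<in> K \<Longrightarrow> of_real (Re x) \<in> K"
proof -
  assume x: "x \<in> K"
  have eq: "of_real (Re x) = (x + cnj x) / 2" by (simp add: complex_eq_iff)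
  show ?thesis unfolding eq by (rule midK[OF x cnjK[OF x]])
qed

lemma iImK: "x \<in> K \<Longrightarrow> \<i> * of_real (Im x) \<in> K"
proof -
  assume x: "x \<in> K"
  have eq: "\<i> * of_real (Im x) = (x + - cnj x) / 2" by (simp add: complex_eq_iff)
  show ?thesis unfolding eq by (rule midK[OF x negK[OF cnjK[OF x]]])
qed

lemma iK: "\<i> \<in> K"
proof -
  have w: "om1 \<in> K" using equi[OF K0 K1 om1_norm om1m_norm] by simp
  have h: "1/2 \<in> K" using midK[OF K0 K1] by simp
  define d where "d = om1 - 1/2"
  have dK: "d \<in> K" unfolding d_def by (rule diffK[OF w h])
  have dd: "d = \<i> * of_real (sqrt 3 / 2)" by (simp add: d_def om1_def complex_eq_iff)
  have d0: "0 \<noteq> d" unfolding dd by simp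
  show ?thesis
  proof (rule line_circle[OF K0 dK K0 K1 d0])
    have "\<i> = 0 + of_real (2 / sqrt 3) * (d - 0)" by (simp add: dd)
    thus "\<i> \<in> line_through 0 d" unfolding line_mem by (rule exI)
    show "\<i> \<in> circle_through 0 1" by (simp add: circ_mem)
  qed
qed

lemma rotK: "of_real t \<in> K \<Longrightarrow> \<i> * of_real t \<in> K"
proof -
  assume t: "of_real t \<in> K"
  show ?thesis
  proof (rule line_circle[OF K0 iK K0 t])
    show "0 \<noteq> \<i>" by simp
    show "\<i> * of_real t \<in> line_through 0 \<i>" by (auto simp: line_mem mult.commute)
    show "\<i> * of_real t \<in> circle_through 0 (of_real t)" by (simp add: circ_mem norm_mult)
  qed
qed

lemma unrotK: "\<i> * of_real t \<in> K \<Longrightarrow> of_real t \<in> K"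
proof -
  assume t: "\<i> * of_real t \<in> K"
  show ?thesis
  proof (rule line_circle[OF K0 K1 K0 t])
    show "0 \<noteq> (1::complex)" by simp
    show "of_real t \<in> line_through 0 1" by (auto simp: line_mem)
    show "of_real t \<in> circle_through 0 (\<i> * of_real t)" by (simp add: circ_mem norm_mult)
  qed
qed

lemma ImK: "x \<in> K \<Longrightarrow> of_real (Im x) \<in> K"
  by (rule unrotK, rule iImK)

lemma ComplexK: "of_real a \<in> K \<Longrightarrow> of_real b \<in> K \<Longrightarrow> Complex a b \<in> K"
proof -
  assume a: "of_real a \<in> K" and b: "of_real b \<in> K"
  have "Complex a b = of_real a + \<i> * of_real b" by (simp add: complex_eq_iff)
  thus ?thesis using addK[OF a rotK[OF b]] by simp
qed

lemma ratioK:
  assumes a: "of_real a \<in> K" and p: "of_real p \<in> K" and q: "of_real q \<in> K" and p0: "p \<noteq> 0"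
  shows "of_real (a * q / p) \<in> K"
proof (cases "a = 0")
  case True thus ?thesis using K0 by simp
next
  case False
  have PK: "Complex p q \<in> K" by (rule ComplexK[OF p q])
  have VK: "Complex a 1 \<in> K" by (rule ComplexK[OF a]) (simp add: K1)
  have z: "Complex a (a * q / p) \<in> K"
  proof (rule line_line[OF K0 PK a VK])
    show "0 \<noteq> Complex p q" using p0 by (simp add: complex_eq_iff)
    show "complex_of_real a \<noteq> Complex a 1" by (simp add: complex_eq_iff)
    have "0 \<in> line_through 0 (Complex p q)" unfolding line_mem by (rule exI[of _ 0]) simp
    moreover have "0 \<notin> line_through (of_real a) (Complex a 1)"
    proof
      assume "0 \<in> line_through (of_real a) (Complex a 1)"
      then obtain t where "0 = of_real a + of_real t * (Complex a 1 - of_real a)" by (auto simp: line_mem)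
      hence "Re 0 = Re (of_real a + of_real t * (Complex a 1 - of_real a))" by simp
      thus False using False by simp
    qed
    ultimately show "line_through 0 (Complex p q) \<noteq> line_through (of_real a) (Complex a 1)" by auto
    have "Complex a (a * q / p) = 0 + of_real (a / p) * (Complex p q - 0)"
      using p0 by (simp add: complex_eq_iff)
    thus "Complex a (a * q / p) \<in> line_through 0 (Complex p q)" unfolding line_mem by (rule exI)
    have "Complex a (a * q / p) = of_real a + of_real (a * q / p) * (Complex a 1 - of_real a)"
      by (simp add: complex_eq_iff)
    thus "Complex a (a * q / p) \<in> line_through (of_real a) (Complex a 1)" unfolding line_mem by (rule exI)
  qed
  show ?thesis using ImK[OF z] by simp
qed

lemma multK: "of_real a \<in> K \<Longrightarrow> of_real b \<in> K \<Longrightarrow> of_real (a * b) \<in> K"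
  using ratioK[of a 1 b] K1 by simp

lemma divK: "of_real a \<in> K \<Longrightarrow> of_real b \<in> K \<Longrightarrow> of_real (a / b) \<in> K"
proof (cases "b = 0")
  case True thus ?thesis using K0 by simp
next
  case False
  assume "of_real a \<in> K" "of_real b \<in> K"
  thus ?thesis using ratioK[of a b 1] K1 False by simp
qed

lemma sqrtK:
  assumes t: "of_real t \<in> K" and t0: "t \<ge> 0"
  shows "of_real (sqrt t) \<in> K"
proof -
  have c: "of_real ((t - 1) / 2) \<in> K"
    using midK[OF diffK[OF t K1] K0] by simp
  have "\<i> * of_real (sqrt t) \<in> K"
  proof (rule line_circle[OF K0 iK c t])
    show "0 \<noteq> \<i>" by simp
    show "\<i> * of_real (sqrt t) \<in> line_through 0 \<i>"
      unfolding line_mem by (rule exI[of _ "sqrt t"]) simp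
    have e: "(- ((t - 1) / 2))^2 + (sqrt t)^2 = ((t - (t - 1) / 2))^2 + 0^2"
      using t0 by (simp add: power2_eq_square field_simps)
    have "cmod (\<i> * of_real (sqrt t) - of_real ((t - 1) / 2)) = cmod (of_real t - of_real ((t - 1) / 2))"
      unfolding cmod_def using e by simp
    thus "\<i> * of_real (sqrt t) \<in> circle_through (of_real ((t - 1) / 2)) (of_real t)"
      by (simp add: circ_mem)
  qed
  thus ?thesis by (rule unrotK)
qed

lemma addR: "of_real a \<in> K \<Longrightarrow> of_real b \<in> K \<Longrightarrow> of_real (a + b) \<in> K"
  by (metis addK of_real_add)
lemma diffR: "of_real a \<in> K \<Longrightarrow> of_real b \<in> K \<Longrightarrow> of_real (a - b) \<in> K"
  by (metis diffK of_real_diff)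
lemma sqR: "of_real a \<in> K \<Longrightarrow> of_real (a^2) \<in> K"
  by (metis multK power2_eq_square)

end



lemma arcosh_inj:
  assumes "s \<ge> 1" "t \<ge> 1" shows "arcosh s = arcosh (t::real) \<longleftrightarrow> s = t"
  by (metis assms cosh_arcosh_real)

lemma hd_eq:
  assumes x: "Im x > 0" and y: "Im y > 0" and z: "Im z > 0"
  shows "hdist x z = hdist z y \<longleftrightarrow> Im y * (cmod (z - x))^2 = Im x * (cmod (z - y))^2"
proof -
  define s where "s = 1 + (cmod (x - z))\<^sup>2 / (2 * Im x * Im z)"
  define t where "t = 1 + (cmod (z - y))\<^sup>2 / (2 * Im z * Im y)"
  have s1: "s \<ge> 1" unfolding s_def using x z by simp
  have t1: "t \<ge> 1" unfolding t_def using y z by simp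
  have "hdist x z = hdist z y \<longleftrightarrow> s = t" unfolding hdist_def s_def[symmetric] t_def[symmetric]
    using arcosh_inj[OF s1 t1] .
  also have "\<dots> \<longleftrightarrow> (cmod (z - x))\<^sup>2 / (2 * Im x * Im z) = (cmod (z - y))\<^sup>2 / (2 * Im z * Im y)"
    unfolding s_def t_def by (simp add: norm_minus_commute)
  also have "\<dots> \<longleftrightarrow> Im y * (cmod (z - x))^2 = Im x * (cmod (z - y))^2"
    using x y z by (simp add: field_simps)
  finally show ?thesis .
qed

lemma coords_identity:
  fixes u1 v1 u2 v2 s :: real
  assumes "s = v1 + v2" "s \<noteq> 0"
  shows "(v2 - v1) * (((u1^2+v1^2) * v2 + (u2^2+v2^2) * v1) / s)
       - 2 * ((u1 * v2 + u2 * v1)/s) * (v2 * u1 - v1 * u2) + v2 * (u1^2+v1^2) - v1 * (u2^2+v2^2) = 0"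
proof -
  have "(v2 - v1) * (((u1^2+v1^2) * v2 + (u2^2+v2^2) * v1) / s)
       - 2 * ((u1 * v2 + u2 * v1)/s) * (v2 * u1 - v1 * u2) + v2 * (u1^2+v1^2) - v1 * (u2^2+v2^2)
     = ((v2 - v1) * ((u1^2+v1^2) * v2 + (u2^2+v2^2) * v1)
       - 2 * (u1 * v2 + u2 * v1) * (v2 * u1 - v1 * u2) + s * (v2 * (u1^2+v1^2) - v1 * (u2^2+v2^2))) / s"
    using assms(2) by (simp add: field_simps)
  also have "\<dots> = 0" by (simp add: assms(1) power2_eq_square algebra_simps)
  finally show ?thesis .
qed


lemma cmod_sq: "(cmod (z - w))^2 = (Re z - Re w)^2 + (Im z - Im w)^2"
  by (simp add: cmod_power2)

lemma cmod_eq_sq: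
  "(Re z - Re w)^2 + (Im z - Im w)^2 = (Re z' - Re w')^2 + (Im z' - Im w')^2 \<Longrightarrow> cmod (z - w) = cmod (z' - w')"
  by (simp add: cmod_def)

theorem theorem1p1:
  fixes x y :: complex
  assumes "Im x > 0" and "Im y > 0" and "x \<noteq> y"
  shows "hyp_midpoint x y \<in> constructible {0, 1, x, y}"
proof -
  define u1 where "u1 = Re x"
  define v1 where "v1 = Im x"
  define u2 where "u2 = Re y"
  define v2 where "v2 = Im y"
  have v1p: "v1 > 0" and v2p: "v2 > 0" using assms by (simp_all add: v1_def v2_def)
  have xy: "(u1, v1) \<noteq> (u2, v2)" using assms(3) by (simp add: u1_def u2_def v1_def v2_def complex_eq_iff)
  define s where "s = v1 + v2"
  have s0: "s > 0" using v1p v2p by (simp add: s_def)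
  define N where "N = v1 * v2 * ((u1 - u2)^2 + s^2)"
  have N0: "N > 0" using v1p v2p s0 by (simp add: N_def add_nonneg_pos)
  define W where "W = (u1^2+v1^2) * v2 + (u2^2+v2^2) * v1"
  define a0 where "a0 = (u1 * v2 + u2 * v1) / s"
  define b0 where "b0 = sqrt N / s"
  define m where "m = Complex a0 b0"
  have b0p: "b0 > 0" using N0 s0 by (simp add: b0_def)
  have b02: "b0^2 = N / s^2" using N0 by (simp add: b0_def power_divide)
  have poly: "(u1 * v2 + u2 * v1)^2 + N = W * s"
    by (simp add: N_def W_def s_def power2_eq_square algebra_simps)
  have P0: "a0^2 + b0^2 = W / s"
  proof -
    have "a0^2 + b0^2 = ((u1 * v2 + u2 * v1)^2 + N) / s^2"
      unfolding a0_def b02 power_divide by (rule add_divide_distrib[symmetric])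
    also have "\<dots> = W / s" unfolding poly using s0 by (simp add: power2_eq_square)
    finally show ?thesis .
  qed
  have Qexp: "v2 * ((a - u1)^2 + (b - v1)^2) - v1 * ((a - u2)^2 + (b - v2)^2)
     = (v2 - v1) * (a^2 + b^2) - 2 * a * (v2 * u1 - v1 * u2) + v2 * (u1^2+v1^2) - v1 * (u2^2+v2^2)" for a b
    by (simp add: power2_eq_square algebra_simps)
  have Qm: "v2 * ((a0 - u1)^2 + (b0 - v1)^2) = v1 * ((a0 - u2)^2 + (b0 - v2)^2)"
  proof -
    have "v2 * ((a0 - u1)^2 + (b0 - v1)^2) - v1 * ((a0 - u2)^2 + (b0 - v2)^2) = 0"
      unfolding Qexp P0 using coords_identity[of s v1 v2 u1 u2] s0
      by (simp add: s_def W_def a0_def)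
    thus ?thesis by simp
  qed
  have hdeq: "Im z > 0 \<Longrightarrow> hdist x z = hdist z y \<longleftrightarrow>
      v2 * ((Re z - u1)^2 + (Im z - v1)^2) = v1 * ((Re z - u2)^2 + (Im z - v2)^2)" for z
    using hd_eq[OF assms(1,2), of z] by (simp add: cmod_sq u1_def u2_def v1_def v2_def)
  have hdm: "hdist x m = hdist m y" using hdeq[of m] b0p Qm by (simp add: m_def)
  have da1: "a0 - u1 = v1 * (u2 - u1) / s" using s0 by (simp add: a0_def s_def field_simps)
  have da2: "a0 - u2 = v2 * (u1 - u2) / s" using s0 by (simp add: a0_def s_def field_simps)
  have circm: "(a0 - c)^2 + b0^2 = (u1 - c)^2 + v1^2"
    if hc: "2 * c * (u2 - u1) = (u2^2+v2^2) - (u1^2+v1^2)" for c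
  proof -
    have e1: "W / s - (u1^2 + v1^2) = v1 * ((u2^2+v2^2) - (u1^2+v1^2)) / s"
      using s0 by (simp add: W_def s_def field_simps)
    have e2: "2 * c * (a0 - u1) = v1 * ((u2^2+v2^2) - (u1^2+v1^2)) / s"
      unfolding da1 hc[symmetric] by simp
    have "(a0 - c)^2 + b0^2 = (a0^2 + b0^2) - 2 * c * a0 + c^2" by (simp add: power2_eq_square algebra_simps)
    also have "\<dots> = (u1^2 + v1^2) + 2 * c * (a0 - u1) - 2 * c * a0 + c^2" using e1 e2 P0 by simp
    also have "\<dots> = (u1 - c)^2 + v1^2" by (simp add: power2_eq_square algebra_simps)
    finally show ?thesis .
  qed
  have mseg: "m \<in> geodesic_segment x y"
  proof (cases "u1 = u2")
    case True
    have a0u: "a0 = u1" using da1 True by simp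
    have "b0^2 = v1 * v2" using b02 s0 True by (simp add: N_def power2_eq_square)
    hence bb: "b0 * b0 = v1 * v2" by (simp add: power2_eq_square)
    have lo: "min v1 v2 \<le> b0"
    proof (cases "v1 \<le> v2")
      case True
      have "v1 * v1 \<le> b0 * b0" using bb True v1p by (simp add: mult_left_mono)
      hence "v1 \<le> b0" using b0p v1p by (metis less_eq_real_def mult_strict_mono not_less)
      thus ?thesis by simp
    next
      case False
      have "v2 * v2 \<le> b0 * b0" using bb False v2p by (simp add: mult_right_mono)
      hence "v2 \<le> b0" using b0p v2p by (metis less_eq_real_def mult_strict_mono not_less)
      thus ?thesis by simp
    qed
    have hi: "b0 \<le> max v1 v2"
    proof (cases "v1 \<le> v2")
      case True
      have "b0 * b0 \<le> v2 * v2" using bb True v2p by (simp add: mult_right_mono)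
      hence "b0 \<le> v2" using b0p v2p by (metis less_eq_real_def mult_strict_mono not_less)
      thus ?thesis by simp
    next
      case False
      have "b0 * b0 \<le> v1 * v1" using bb False v1p by (simp add: mult_left_mono)
      hence "b0 \<le> v1" using b0p v1p by (metis less_eq_real_def mult_strict_mono not_less)
      thus ?thesis by simp
    qed
    show ?thesis using True a0u lo hi
      by (simp add: geodesic_segment_def m_def u1_def u2_def v1_def v2_def)
  next
    case False
    define c where "c = ((u2^2+v2^2) - (u1^2+v1^2)) / (2 * (u2 - u1))"
    have d: "2 * (u2 - u1) \<noteq> 0" using False by simp
    have hc': "c * (2 * (u2 - u1)) = (u2^2+v2^2) - (u1^2+v1^2)"
      unfolding c_def using d by (rule nonzero_divide_mult_cancel_right[THEN sym, THEN sym, OF _] | simp)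
    have hc: "2 * c * (u2 - u1) = (u2^2+v2^2) - (u1^2+v1^2)" using hc' by (simp add: algebra_simps)
    have e: "(u1 - c)^2 + v1^2 - ((u2 - c)^2 + v2^2) = (u1^2+v1^2) - (u2^2+v2^2) + 2 * c * (u2 - u1)"
      by (simp add: power2_eq_square algebra_simps)
    have xc: "cmod (x - of_real c) = cmod (y - of_real c)"
      by (rule cmod_eq_sq) (use e hc in \<open>simp add: u1_def u2_def v1_def v2_def\<close>)
    have mc: "cmod (m - of_real c) = cmod (x - of_real c)"
      by (rule cmod_eq_sq) (use circm[OF hc] in \<open>simp add: m_def u1_def v1_def\<close>)
    have rb: "min u1 u2 \<le> a0 \<and> a0 \<le> max u1 u2"
    proof (cases "u1 \<le> u2")
      case True
      have "0 \<le> v1 * (u2 - u1) / s" using True v1p s0 by simp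
      moreover have "v2 * (u1 - u2) / s \<le> 0" using True v2p s0 by (simp add: divide_nonpos_pos mult_nonneg_nonpos)
      ultimately show ?thesis using da1 da2 True by simp
    next
      case False
      have "v1 * (u2 - u1) / s \<le> 0" using False v1p s0 by (simp add: divide_nonpos_pos mult_nonneg_nonpos)
      moreover have "0 \<le> v2 * (u1 - u2) / s" using False v2p s0 by simp
      ultimately show ?thesis using da1 da2 False by simp
    qed
    show ?thesis unfolding geodesic_segment_def using False
      apply (simp add: u1_def u2_def)
      apply (rule exI[of _ c])
      using xc mc rb b0p by (simp add: m_def u1_def u2_def)
  qed
  have uniq: "z = m" if zseg: "z \<in> geodesic_segment x y" and hz: "hdist x z = hdist z y" for z
  proof (cases "u1 = u2")
    case True
    have zr: "Re z = u1" and zlo: "min v1 v2 \<le> Im z"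
      using zseg True by (auto simp: geodesic_segment_def u1_def u2_def v1_def v2_def)
    have zp: "Im z > 0" using zlo v1p v2p by linarith
    have Qz: "v2 * ((Re z - u1)^2 + (Im z - v1)^2) = v1 * ((Re z - u2)^2 + (Im z - v2)^2)"
      using hdeq[OF zp] hz by simp
    have "(v2 - v1) * ((Im z)^2 - v1 * v2) = 0"
      using Qexp[of "Re z" "Im z"] Qz zr True by (simp add: power2_eq_square algebra_simps)
    moreover have "v1 \<noteq> v2" using xy True by auto
    ultimately have "(Im z)^2 = v1 * v2" by simp
    moreover have "b0^2 = v1 * v2" using b02 s0 True by (simp add: N_def power2_eq_square)
    ultimately have "Im z = b0" using zp b0p by (metis less_eq_real_def power2_eq_imp_eq)
    moreover have "Re z = a0" using da1 True zr by simp
    ultimately show ?thesis by (simp add: m_def complex_eq_iff)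
  next
    case False
    obtain c where c1: "cmod (x - of_real c) = cmod (y - of_real c)"
      and c2: "cmod (z - of_real c) = cmod (x - of_real c)" and zp: "Im z > 0"
      using zseg False by (auto simp: geodesic_segment_def u1_def u2_def)
    have c1': "(u1 - c)^2 + v1^2 = (u2 - c)^2 + v2^2"
      using arg_cong[OF c1, of "\<lambda>t. t^2"] by (simp add: cmod_sq u1_def u2_def v1_def v2_def)
    have hc: "2 * c * (u2 - u1) = (u2^2+v2^2) - (u1^2+v1^2)"
      using c1' by (simp add: power2_eq_square algebra_simps)
    have Gz: "(Re z - c)^2 + (Im z)^2 = (u1 - c)^2 + v1^2"
      using arg_cong[OF c2, of "\<lambda>t. t^2"] by (simp add: cmod_sq u1_def v1_def)
    have Gm: "(a0 - c)^2 + b0^2 = (u1 - c)^2 + v1^2" by (rule circm[OF hc])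
    have Qz: "v2 * ((Re z - u1)^2 + (Im z - v1)^2) = v1 * ((Re z - u2)^2 + (Im z - v2)^2)"
      using hdeq[OF zp] hz by simp
    define L where "L a = (v2 - v1) * (2 * a * c + u1^2 + v1^2 - 2 * u1 * c) - 2 * a * (v2 * u1 - v1 * u2)
        + v2 * (u1^2+v1^2) - v1 * (u2^2+v2^2)" for a
    define \<alpha> where "\<alpha> = 2 * (v2 - v1) * c - 2 * (v2 * u1 - v1 * u2)"
    have Laff: "L a - L a' = \<alpha> * (a - a')" for a a'
      by (simp add: L_def \<alpha>_def algebra_simps)
    have Pz: "(Re z)^2 + (Im z)^2 = 2 * Re z * c + u1^2 + v1^2 - 2 * u1 * c"
      using Gz by (simp add: power2_eq_square algebra_simps)
    have Pm: "a0^2 + b0^2 = 2 * a0 * c + u1^2 + v1^2 - 2 * u1 * c"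
      using Gm by (simp add: power2_eq_square algebra_simps)
    have Lz: "L (Re z) = 0"
      using Qexp[of "Re z" "Im z"] Qz Pz by (simp add: L_def)
    have Lm: "L a0 = 0"
      using Qexp[of a0 b0] Qm Pm by (simp add: L_def)
    have Lu: "L u1 = - v1 * ((u1 - u2)^2 + (v1 - v2)^2)"
      using Qexp[of u1 v1] by (simp add: L_def power2_eq_square algebra_simps)
    have Lu0: "L u1 \<noteq> 0"
    proof -
      have "(u1 - u2)^2 + (v1 - v2)^2 > 0" using xy by (auto simp: sum_power2_gt_zero_iff)
      hence "v1 * ((u1 - u2)^2 + (v1 - v2)^2) > 0" using v1p by (rule mult_pos_pos[rotated])
      thus ?thesis using Lu by linarith
    qed
    have ra: "Re z = a0"
    proof (rule ccontr)
      assume ne: "Re z \<noteq> a0"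
      have "\<alpha> * (Re z - a0) = 0" using Laff[of "Re z" a0] Lz Lm by simp
      hence "\<alpha> = 0" using ne by simp
      hence "L u1 = L a0" using Laff[of u1 a0] by simp
      thus False using Lm Lu0 by simp
    qed
    have "(Im z)^2 = b0^2" using Pz Pm ra by simp
    hence "Im z = b0" using zp b0p by (metis less_eq_real_def power2_eq_imp_eq)
    thus ?thesis using ra by (simp add: m_def complex_eq_iff)
  qed
  have hm: "hyp_midpoint x y = m"
    unfolding hyp_midpoint_def
  proof (rule the_equality)
    show "m \<in> geodesic_segment x y \<and> hdist x m = hdist m y" using mseg hdm by blast
    show "z = m" if "z \<in> geodesic_segment x y \<and> hdist x z = hdist z y" for z
      using that uniq by blast
  qed
  let ?S = "{0, 1, x, y}"
  have S0: "0 \<in> ?S" and S1: "1 \<in> ?S" by simp_all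
  have xK: "x \<in> constructible ?S" and yK: "y \<in> constructible ?S" by (auto intro: constructible.base)
  have u1K: "of_real u1 \<in> constructible ?S" unfolding u1_def by (rule ReK[OF S0 S1 xK])
  have u2K: "of_real u2 \<in> constructible ?S" unfolding u2_def by (rule ReK[OF S0 S1 yK])
  have v1K: "of_real v1 \<in> constructible ?S" unfolding v1_def by (rule ImK[OF S0 S1 xK])
  have v2K: "of_real v2 \<in> constructible ?S" unfolding v2_def by (rule ImK[OF S0 S1 yK])
  note aR = addR[OF S0 S1] and dR = diffR[OF S0 S1] and mR = multK[OF S0 S1]
    and qR = divK[OF S0 S1] and sR = sqR[OF S0 S1]
  have sK: "of_real s \<in> constructible ?S" unfolding s_def by (rule aR[OF v1K v2K])
  have NK: "of_real N \<in> constructible ?S" unfolding N_def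
    by (rule mR[OF mR[OF v1K v2K] aR[OF sR[OF dR[OF u1K u2K]] sR[OF sK]]])
  have a0K: "of_real a0 \<in> constructible ?S" unfolding a0_def
    by (rule qR[OF aR[OF mR[OF u1K v2K] mR[OF u2K v1K]] sK])
  have b0K: "of_real b0 \<in> constructible ?S" unfolding b0_def
    by (rule qR[OF sqrtK[OF S0 S1 NK] sK]) (use N0 in simp)
  show ?thesis unfolding hm m_def by (rule ComplexK[OF S0 S1 a0K b0K])
qed

end
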